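(* Let $m$ be an even positive integer, $q=2^m$, and let $\{u_1,u_2,u_3\}$ be a $3$-element subset of $U_{q+1}$. Let $M_3$ be the $4\times3$ matrix whose $j$-th column is $(u_j^{-5},u_j^{-3},u_j^{3},u_j^{5})^T$. Then $\mathrm{rank}(M_3)=3$.
   Context: $U_{q+1}$ denotes the set of $(q+1)$-th roots of unity in $\mathrm{GF}(q^2)$; ranks are over $\mathrm{GF}(q^2)$. *)

theory Defs
  imports "HOL-Analysis.Analysis"
begin

definition roots_of_unity :: "nat \<Rightarrow> 'a::field set" where
  "roots_of_unity n = {x. x ^ n = 1}"

definition M3 :: "'a::field \<Rightarrow> 'a \<Rightarrow> 'a \<Rightarrow> 'a^3^4" where
  "M3 u1 u2 u3 = vector (map (\<lambda>e::int. vector [u1 powi e, u2 powi e, u3 powi e]) [-5, -3, 3, 5])"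

end

theory Submission
  imports Defs
begin

lemma vector_4:
 "(vector [a,b,c,d] ::('a::zero)^4)$1 = a"
 "(vector [a,b,c,d] ::('a::zero)^4)$2 = b"
 "(vector [a,b,c,d] ::('a::zero)^4)$3 = c"
 "(vector [a,b,c,d] ::('a::zero)^4)$4 = d"
  unfolding vector_def by simp_all

lemma char2:
  assumes "CARD('a::{field,finite}) = 2 ^ k" "k > 0"
  shows "(2::'a) = 0"
proof -
  have "(\<Sum>x\<in>(UNIV::'a set). x) = (\<Sum>x\<in>UNIV. x + 1)"
    by (rule sum.reindex_bij_witness[where i="\<lambda>x. x + 1" and j="\<lambda>x. x - 1"]) simp_all
  also have "\<dots> = (\<Sum>x\<in>(UNIV::'a set). x) + of_nat CARD('a)"
    by (simp add: sum.distrib)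
  finally have "(of_nat CARD('a) :: 'a) = 0" by simp
  then have "(2::'a) ^ k = 0" using assms(1) by simp
  then show ?thesis by (metis power_eq_0_iff)
qed

lemma key:
  fixes z1 z2 z3 d1 d2 d3 :: "'a::field"
  assumes two: "(2::'a) = 0"
    and dz: "z1 \<noteq> z2" "z1 \<noteq> z3" "z2 \<noteq> z3"
    and e0: "d1 + d2 + d3 = 0"
    and e1: "d1 * z1 + d2 * z2 + d3 * z3 = 0"
    and e4: "d1 * z1^4 + d2 * z2^4 + d3 * z3^4 = 0"
    and e5: "d1 * z1^5 + d2 * z2^5 + d3 * z3^5 = 0"
  shows "d1 = 0 \<and> d2 = 0 \<and> d3 = 0"
proof -
  define h2 where "h2 = z1^2+z2^2+z3^2+z1*z2+z1*z3+z2*z3"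
  define h3 where "h3 = z1^3+z2^3+z3^3+z1^2*z2+z1^2*z3+z2^2*z1+z2^2*z3+z3^2*z1+z3^2*z2+z1*z2*z3"
  have d3: "d3 = - d1 - d2" using e0 by algebra
  have "d1 * ((z1-z3)*(z2-z3)*(z2-z1)) * h2 = 0"
  proof -
    have "d1 * ((z1-z3)*(z2-z3)*(z2-z1)) * h2 = (z2^4-z3^4) * (d1 * z1 + d2 * z2 + d3 * z3) - (z2 - z3) * (d1 * z1^4 + d2 * z2^4 + d3 * z3^4)"
      unfolding d3 h2_def by algebra
    then show ?thesis using e1 e4 by simp
  qed
  moreover have "d1 * ((z1-z3)*(z2-z3)*(z2-z1)) * h3 = 0"
  proof -
    have "d1 * ((z1-z3)*(z2-z3)*(z2-z1)) * h3 = (z2^5-z3^5) * (d1 * z1 + d2 * z2 + d3 * z3) - (z2 - z3) * (d1 * z1^5 + d2 * z2^5 + d3 * z3^5)"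
      unfolding d3 h3_def by algebra
    then show ?thesis using e1 e5 by simp
  qed
  ultimately have d1z: "d1 = 0"
  proof -
    assume a: "d1 * ((z1-z3)*(z2-z3)*(z2-z1)) * h2 = 0" "d1 * ((z1-z3)*(z2-z3)*(z2-z1)) * h3 = 0"
    show "d1 = 0"
    proof (rule ccontr)
      assume "d1 \<noteq> 0"
      with a dz have H: "h2 = 0" "h3 = 0" by auto
      define s where "s = z1 + z2 + z3"
      define e2 where "e2 = z1*z2+z1*z3+z2*z3"
      define e3 where "e3 = z1*z2*z3"
      have Q: "e2 = s^2 - h2" unfolding e2_def s_def h2_def by algebra
      have R: "e3 = h3 - s^3 + 2* s *e2" unfolding e3_def e2_def s_def h3_def by algebra
      have E2: "e2 = s^2" using Q H by simp
      have E3a: "e3 + s^3 = 0" using R H two E2 by (simp add: eq_neg_iff_add_eq_0 flip: mult_2)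
      have E3b: "s^3 + s^3 = 0" using two by (metis mult_2 mult_zero_left)
      have E3: "e3 = s^3" using E3a E3b by (metis add_right_cancel)
      have "(z1 - s)^3 = 0"
      proof -
        have P: "z1^3 - s * z1^2 + e2*z1 - e3 = 0" unfolding e3_def e2_def s_def by algebra
        have "(z1 - s)^3 = (z1^3 - s * z1^2 + s^2*z1 - s^3) - 2*(z1^2 * s - z1 * s^2)" by algebra
        then show ?thesis using P E2 E3 two by simp
      qed
      moreover have "(z2 - s)^3 = 0"
      proof -
        have P: "z2^3 - s * z2^2 + e2*z2 - e3 = 0" unfolding e3_def e2_def s_def by algebra
        have "(z2 - s)^3 = (z2^3 - s * z2^2 + s^2*z2 - s^3) - 2*(z2^2 * s - z2 * s^2)" by algebra
        then show ?thesis using P E2 E3 two by simp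
      qed
      ultimately have "z1 = z2" by simp
      with dz show False by simp
    qed
  qed
  have "d2 * (z2 - z3) = 0" using e1 d1z d3 by (simp add: algebra_simps)
  then have "d2 = 0" using dz by simp
  then show ?thesis using d1z d3 by simp
qed


lemma powi_facts:
  fixes u :: "'a::field"
  assumes "u \<noteq> 0"
  shows "u powi (-5) = inverse u ^ 5"
    "u powi (-3) = inverse u ^ 5 * (u^2)"
    "u powi 3 = inverse u ^ 5 * (u^2)^4"
    "u powi 5 = inverse u ^ 5 * (u^2)^5"
  using assms by (simp_all add: power_int_minus field_simps flip: power_mult)

lemma sq_inj2:
  fixes a b :: "'a::field"
  assumes "(2::'a) = 0" "a^2 = b^2"
  shows "a = b"
proof -
  have "(a - b)^2 = a^2 + b^2 - 2*a*b" by algebra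
  also have "\<dots> = 2 * b^2" using assms by (simp add: mult_2)
  also have "\<dots> = 0" using assms by simp
  finally show ?thesis by simp
qed

theorem lemma16:
  fixes m :: nat and q :: nat and u1 u2 u3 :: "'a::{field,finite}"
  assumes "even m" and "m > 0" and "q = 2 ^ m"
    and "CARD('a) = q ^ 2"
    and "u1 \<in> roots_of_unity (q + 1)" and "u2 \<in> roots_of_unity (q + 1)"
    and "u3 \<in> roots_of_unity (q + 1)"
    and "u1 \<noteq> u2" and "u1 \<noteq> u3" and "u2 \<noteq> u3"
  shows "rank (M3 u1 u2 u3) = 3"
proof -
  have two: "(2::'a) = 0"
    using char2[of "m * 2"] assms(2-4) by (simp add: power_mult)
  have nz: "u1 \<noteq> 0" "u2 \<noteq> 0" "u3 \<noteq> 0"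
    using assms(5-7) by (auto simp: roots_of_unity_def)
  have dz: "u1^2 \<noteq> u2^2" "u1^2 \<noteq> u3^2" "u2^2 \<noteq> u3^2"
    using sq_inj2[OF two] assms(8-10) by blast+
  have ker: "\<forall>x. M3 u1 u2 u3 *v x = 0 \<longrightarrow> x = 0"
  proof (intro allI impI)
    fix x :: "'a^3"
    assume H: "M3 u1 u2 u3 *v x = 0"
    have comp: "\<And>i. (\<Sum>j\<in>UNIV. (M3 u1 u2 u3)$i$j * x$j) = 0"
      using H by (simp add: matrix_vector_mult_def vec_eq_iff)
    define d1 where "d1 = x$1 * inverse u1 ^ 5"
    define d2 where "d2 = x$2 * inverse u2 ^ 5"
    define d3 where "d3 = x$3 * inverse u3 ^ 5"
    have r1: "M3 u1 u2 u3 $ 1 = vector [u1 powi (-5), u2 powi (-5), u3 powi (-5)]"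
     and r2: "M3 u1 u2 u3 $ 2 = vector [u1 powi (-3), u2 powi (-3), u3 powi (-3)]"
     and r3: "M3 u1 u2 u3 $ 3 = vector [u1 powi 3, u2 powi 3, u3 powi 3]"
     and r4: "M3 u1 u2 u3 $ 4 = vector [u1 powi 5, u2 powi 5, u3 powi 5]"
      unfolding M3_def by (simp_all add: vector_4)
    have e0: "d1 + d2 + d3 = 0"
      using comp[of 1] unfolding r1 sum_3 d1_def d2_def d3_def
      by (simp add: powi_facts nz algebra_simps)
    have e1: "d1 * u1^2 + d2 * u2^2 + d3 * u3^2 = 0"
      using comp[of 2] unfolding r2 sum_3 d1_def d2_def d3_def
      by (simp add: powi_facts nz algebra_simps)
    have e4: "d1 * (u1^2)^4 + d2 * (u2^2)^4 + d3 * (u3^2)^4 = 0"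
      using comp[of 3] unfolding r3 sum_3 d1_def d2_def d3_def
      by (simp only: vector_3 powi_facts[OF nz(1)] powi_facts[OF nz(2)] powi_facts[OF nz(3)]) (simp add: algebra_simps)
    have e5: "d1 * (u1^2)^5 + d2 * (u2^2)^5 + d3 * (u3^2)^5 = 0"
      using comp[of 4] unfolding r4 sum_3 d1_def d2_def d3_def
      by (simp only: vector_3 powi_facts[OF nz(1)] powi_facts[OF nz(2)] powi_facts[OF nz(3)]) (simp add: algebra_simps)
    have "d1 = 0 \<and> d2 = 0 \<and> d3 = 0"
      by (rule key[OF two dz e0 e1 e4 e5])
    then have "x$1 = 0" "x$2 = 0" "x$3 = 0"
      using nz by (simp_all add: d1_def d2_def d3_def)
    then show "x = 0"
      by (simp add: vec_eq_iff forall_3)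
  qed
  have "vec.span (rows (M3 u1 u2 u3)) = UNIV"
    using ker by (simp add: matrix_left_invertible_span_rows_gen [symmetric] matrix_left_invertible_ker)
  then have "vec.dim (rows (M3 u1 u2 u3)) = vec.dim (UNIV::('a^3) set)"
    by (metis vec.dim_span)
  then show ?thesis
    by (simp add: row_rank_def_gen vec_dim_card card_cart_basis)
qed

end
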